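(* Let $G$ be a graph, $V\subseteq V(G)$ and $k\geq 0$. If every ordering $SV$ of $V$ has a witnessing matching of size at least $k$, then the partial matching width of $V$ is at least $k/2$.
   Context: Partial matching width of $V\subseteq V(G)$: the largest integer $k$ such that for every ordering of $V$ there is a prefix $SV'$ (viewed as a set) such that $G$ has a matching of size at least $k$ each of whose edges has one endpoint in $SV'$ and the other in $V(G)\setminus SV'$. Witnessing matching: for an ordering $SV$ of $V$, a partition of $SV$ into a prefix $SV_1$ and a suffix $SV_2$ supports an edge $\{u,v\}$ if either one endpoint is in $SV_1$ and the other in $SV_2$, or one endpoint is in $V$ and the other in $V(G)\setminus V$. A matching $M$ is witnessing for $SV$ if some partition of $SV$ into a prefix and a suffix supports every edge of $M$. *)

theory Defs
  imports Main
begin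

definition graph :: "'a set \<Rightarrow> 'a set set \<Rightarrow> bool" where
  "graph VG E \<longleftrightarrow> finite VG \<and> (\<forall>e\<in>E. \<exists>u v. e = {u, v} \<and> u \<noteq> v \<and> u \<in> VG \<and> v \<in> VG)"

definition matching :: "'a set set \<Rightarrow> 'a set set \<Rightarrow> bool" where
  "matching E M \<longleftrightarrow> M \<subseteq> E \<and> (\<forall>e1\<in>M. \<forall>e2\<in>M. e1 \<noteq> e2 \<longrightarrow> e1 \<inter> e2 = {})"

definition orderings :: "'a set \<Rightarrow> 'a list set" where
  "orderings V = {xs. distinct xs \<and> set xs = V}"

definition crosses :: "'a set \<Rightarrow> 'a set \<Rightarrow> 'a set \<Rightarrow> bool" where
  "crosses VG S e \<longleftrightarrow> (\<exists>u v. e = {u, v} \<and> u \<in> S \<and> v \<in> VG - S)"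

definition pmw_ok :: "'a set \<Rightarrow> 'a set set \<Rightarrow> 'a set \<Rightarrow> nat \<Rightarrow> bool" where
  "pmw_ok VG E V k \<longleftrightarrow> (\<forall>xs\<in>orderings V. \<exists>i\<le>length xs. \<exists>M.
      matching E M \<and> card M \<ge> k \<and> (\<forall>e\<in>M. crosses VG (set (take i xs)) e))"

definition pmw :: "'a set \<Rightarrow> 'a set set \<Rightarrow> 'a set \<Rightarrow> nat" where
  "pmw VG E V = (GREATEST k. pmw_ok VG E V k)"

definition supports :: "'a set \<Rightarrow> 'a set \<Rightarrow> 'a set \<Rightarrow> 'a set \<Rightarrow> 'a set \<Rightarrow> bool" where
  "supports VG V S1 S2 e \<longleftrightarrow> (\<exists>u v. e = {u, v} \<and>
      ((u \<in> S1 \<and> v \<in> S2) \<or> (u \<in> V \<and> v \<in> VG - V)))"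

definition witnessing :: "'a set \<Rightarrow> 'a set \<Rightarrow> 'a list \<Rightarrow> 'a set set \<Rightarrow> bool" where
  "witnessing VG V xs M \<longleftrightarrow> (\<exists>i\<le>length xs.
      \<forall>e\<in>M. supports VG V (set (take i xs)) (set (drop i xs)) e)"

end

theory Submission
  imports Defs
begin

lemma finE: assumes "graph VG E" shows "finite E"
proof -
  have "E \<subseteq> Pow VG" using assms unfolding graph_def by fastforce
  moreover have "finite VG" using assms unfolding graph_def by simp
  ultimately show ?thesis using finite_subset by blast
qed

lemma pmw_bound:
  assumes "graph VG E" "pmw_ok VG E V k" "V \<subseteq> VG"
  shows "k \<le> card E"
proof -
  have fE: "finite E" using finE[OF assms(1)] .
  have fV: "finite V" using assms(1,3) unfolding graph_def using finite_subset by auto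
  obtain xs where "distinct xs" "set xs = V" using finite_distinct_list[OF fV] by blast
  then have "xs \<in> orderings V" unfolding orderings_def by simp
  then obtain i M where "matching E M" "card M \<ge> k" using assms(2) unfolding pmw_ok_def by blast
  then have "M \<subseteq> E" unfolding matching_def by blast
  then have "card M \<le> card E" using fE card_mono by blast
  with \<open>card M \<ge> k\<close> show ?thesis by simp
qed

theorem proposition3:
  fixes VG :: "'a set" and E :: "'a set set" and V :: "'a set" and k :: nat
  assumes "graph VG E"
    and "V \<subseteq> VG"
    and "\<forall>xs\<in>orderings V. \<exists>M. matching E M \<and> witnessing VG V xs M \<and> card M \<ge> k"
  shows "2 * pmw VG E V \<ge> k"
proof -
  have fE: "finite E" using finE[OF assms(1)] .
  have ok: "pmw_ok VG E V ((k+1) div 2)"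
    unfolding pmw_ok_def
  proof
    fix xs assume xs: "xs \<in> orderings V"
    then have dist: "distinct xs" and sxs: "set xs = V" unfolding orderings_def by auto
    obtain M where M: "matching E M" "witnessing VG V xs M" "card M \<ge> k"
      using assms(3) xs by blast
    obtain i where i: "i \<le> length xs"
      "\<forall>e\<in>M. supports VG V (set (take i xs)) (set (drop i xs)) e"
      using M(2) unfolding witnessing_def by blast
    define M1 where "M1 = {e\<in>M. crosses VG (set (take i xs)) e}"
    define M2 where "M2 = {e\<in>M. crosses VG (set (take (length xs) xs)) e}"
    have sub: "M \<subseteq> M1 \<union> M2"
    proof
      fix e assume e: "e \<in> M"
      then obtain u v where uv: "e = {u,v}"
        "(u \<in> set (take i xs) \<and> v \<in> set (drop i xs)) \<or> (u \<in> V \<and> v \<in> VG - V)"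
        using i(2) unfolding supports_def by blast
      show "e \<in> M1 \<union> M2"
      proof (cases "u \<in> set (take i xs) \<and> v \<in> set (drop i xs)")
        case True
        have "v \<notin> set (take i xs)" using True dist set_take_disj_set_drop_if_distinct by fastforce
        moreover have "v \<in> VG" using True assms(2) sxs by (meson in_set_dropD subsetD)
        ultimately have "crosses VG (set (take i xs)) e" unfolding crosses_def using True uv(1) by blast
        then show ?thesis using e M1_def by blast
      next
        case False
        then have "u \<in> V \<and> v \<in> VG - V" using uv(2) by blast
        then have "crosses VG (set (take (length xs) xs)) e" unfolding crosses_def using uv(1) sxs by auto
        then show ?thesis using e M2_def by blast
      qed
    qed
    have ME: "M \<subseteq> E" using M(1) unfolding matching_def by blast
    have "card M \<le> card (M1 \<union> M2)"
      using sub ME fE M1_def M2_def by (intro card_mono) (auto intro: finite_subset)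
    also have "\<dots> \<le> card M1 + card M2" by (rule card_Un_le)
    finally have le: "k \<le> card M1 + card M2" using M(3) by simp
    have m1: "matching E M1" "matching E M2" using M(1) unfolding matching_def M1_def M2_def by auto
    show "\<exists>i\<le>length xs. \<exists>M. matching E M \<and> card M \<ge> (k+1) div 2 \<and>
            (\<forall>e\<in>M. crosses VG (set (take i xs)) e)"
    proof (cases "card M1 \<ge> (k+1) div 2")
      case True
      then show ?thesis using i(1) m1(1) unfolding M1_def by (intro exI[of _ i]) auto
    next
      case False
      then have "card M2 \<ge> (k+1) div 2" using le by linarith
      then show ?thesis using m1(2) unfolding M2_def by (intro exI[of _ "length xs"]) auto
    qed
  qed
  have "(k+1) div 2 \<le> pmw VG E V"
    unfolding pmw_def
    by (rule Greatest_le_nat[where b="card E"], rule ok) (use pmw_bound assms in blast)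
  then show ?thesis by linarith
qed

end
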